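(* Let $\mathcal{X}=\{(\mathbf{x}^{(1,m)},\ldots,\mathbf{x}^{(N,m)})\in(\mathbb{R}^D)^N\}_{m=1}^M$ and let $\bar{\mathcal{K}}\subseteq[N]$ have even size. Then there exists a complete undirected weighted graph with vertex set $\bar{\mathcal{K}}$ and edge weights $w$ such that for every $\mathcal{K}\subset\bar{\mathcal{K}}$, the weight of the cut induced by $\mathcal{K}$, namely $\sum_{n\in\mathcal{K},\,n'\in\bar{\mathcal{K}}\setminus\mathcal{K}}w(\{n,n'\})$, equals $\frac12\big[\mathrm{SE}(\mathcal{X};\mathcal{K})+\mathrm{SE}(\mathcal{X};\bar{\mathcal{K}}\setminus\mathcal{K})\big]$ up to an additive constant independent of $\mathcal{K}$. In particular, the problem $\min_{\mathcal{K}\subset\bar{\mathcal{K}},\,|\mathcal{K}|=|\bar{\mathcal{K}}|/2}\frac12\big[\mathrm{SE}(\mathcal{X};\mathcal{K})+\mathrm{SE}(\mathcal{X};\bar{\mathcal{K}}\setminus\mathcal{K})\big]$ is a minimum balanced cut problem on this complete graph with $|\bar{\mathcal{K}}|$ vertices.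
   Context: $[N]=\{1,\ldots,N\}$. For the instance set $\mathcal{X}$, let $\mu^{(n)}=\frac1M\sum_m\mathbf{x}^{(n,m)}$, $\Sigma^{(n)}=\frac1M\sum_m(\mathbf{x}^{(n,m)}-\mu^{(n)})\otimes(\mathbf{x}^{(n,m)}-\mu^{(n)})$ and $\Sigma^{(n,n')}=\frac1M\sum_m(\mathbf{x}^{(n,m)}-\mu^{(n)})\otimes(\mathbf{x}^{(n',m)}-\mu^{(n')})$. The multivariate Pearson correlation of features $n,n'$ is $p_{n,n'}:=\mathrm{tr}(\Sigma^{(n,n')})/\mathrm{tr}\big((\Sigma^{(n)}\Sigma^{(n')})^{1/2}\big)$. For $\mathcal{K}\subseteq[N]$ the surrogate entanglement is $\mathrm{SE}(\mathcal{X};\mathcal{K}):=\sum_{n\in\mathcal{K},\,n'\in[N]\setminus\mathcal{K}}p_{n,n'}$. *)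

theory Defs
  imports "HOL-Analysis.Analysis"
begin

text \<open>Data set: x n m is the vector x^(n,m) in R^D (D = CARD('d)),
  for features n in [N] = {1..N} and samples m in {1..M}.\<close>

definition outer :: "real^'d \<Rightarrow> real^'d \<Rightarrow> real^'d^'d" where
  "outer a b = (\<chi> i j. a$i * b$j)"

definition feat_mean :: "nat \<Rightarrow> (nat \<Rightarrow> nat \<Rightarrow> real^'d) \<Rightarrow> nat \<Rightarrow> real^'d" where
  "feat_mean M x n = (1 / real M) *\<^sub>R (\<Sum>m=1..M. x n m)"

definition cross_cov :: "nat \<Rightarrow> (nat \<Rightarrow> nat \<Rightarrow> real^'d) \<Rightarrow> nat \<Rightarrow> nat \<Rightarrow> real^'d^'d" where
  "cross_cov M x n n' = (1 / real M) *\<^sub>R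
     (\<Sum>m=1..M. outer (x n m - feat_mean M x n) (x n' m - feat_mean M x n'))"

abbreviation cov :: "nat \<Rightarrow> (nat \<Rightarrow> nat \<Rightarrow> real^'d) \<Rightarrow> nat \<Rightarrow> real^'d^'d" where
  "cov M x n \<equiv> cross_cov M x n n"

text \<open>Principal matrix square root: a square root all of whose (complex) eigenvalues
  are nonnegative reals.\<close>
definition complexify :: "real^'d^'d \<Rightarrow> complex^'d^'d" where
  "complexify S = (\<chi> i j. complex_of_real (S$i$j))"

definition msqrt :: "real^'d^'d \<Rightarrow> real^'d^'d" where
  "msqrt A = (SOME S. S ** S = A \<and>
      (\<forall>c::complex. det (complexify S - mat c) = 0 \<longrightarrow> Im c = 0 \<and> Re c \<ge> 0))"

definition pearson :: "nat \<Rightarrow> (nat \<Rightarrow> nat \<Rightarrow> real^'d) \<Rightarrow> nat \<Rightarrow> nat \<Rightarrow> real" where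
  "pearson M x n n' = trace (cross_cov M x n n') / trace (msqrt (cov M x n ** cov M x n'))"

definition SE :: "nat \<Rightarrow> nat \<Rightarrow> (nat \<Rightarrow> nat \<Rightarrow> real^'d) \<Rightarrow> nat set \<Rightarrow> real" where
  "SE N M x K = (\<Sum>n\<in>K. \<Sum>n'\<in>{1..N} - K. pearson M x n n')"

definition cut_weight :: "(nat set \<Rightarrow> real) \<Rightarrow> nat set \<Rightarrow> nat set \<Rightarrow> real" where
  "cut_weight w V K = (\<Sum>n\<in>K. \<Sum>n'\<in>V - K. w {n, n'})"

end

theory Submission
  imports Defs
begin

lemma w_pair:
  fixes p :: "nat \<Rightarrow> nat \<Rightarrow> real"
  assumes "a \<noteq> b"
  shows "(1/2) * (\<Sum>u\<in>{a,b}. \<Sum>v\<in>{a,b} - {u}. p u v) = (1/2) * (p a b + p b a)"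
proof -
  have "{a,b} - {a} = {b}" "{a,b} - {b} = {a}" using assms by auto
  then show ?thesis using assms by simp
qed

lemma cut_part:
  fixes N M :: nat and x :: "nat \<Rightarrow> nat \<Rightarrow> real^'d" and Kbar :: "nat set"
  assumes sub: "Kbar \<subseteq> {1..N}" and KK: "K \<subseteq> Kbar"
  defines "w \<equiv> (\<lambda>S. (1/2) * (\<Sum>u\<in>S. \<Sum>v\<in>S - {u}. pearson M x u v))"
  defines "c \<equiv> - (1/2) * (\<Sum>n\<in>Kbar. \<Sum>n'\<in>{1..N} - Kbar. pearson M x n n')"
  shows "cut_weight w Kbar K = (1/2) * (SE N M x K + SE N M x (Kbar - K)) + c"
proof -
  let ?p = "pearson M x"
  let ?L = "Kbar - K" and ?O = "{1..N} - Kbar"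
  have fKb: "finite Kbar" using sub finite_subset by blast
  have fK: "finite K" using KK fKb finite_subset by blast
  have fL: "finite ?L" using fKb by simp
  have fO: "finite ?O" by simp
  have e1: "{1..N} - K = ?L \<union> ?O" using sub KK by auto
  have e2: "{1..N} - ?L = K \<union> ?O" using sub KK by auto
  have SK: "SE N M x K = (\<Sum>n\<in>K. \<Sum>n'\<in>?L. ?p n n') + (\<Sum>n\<in>K. \<Sum>n'\<in>?O. ?p n n')"
  proof -
    have "\<And>n. sum (?p n) (?L \<union> ?O) = sum (?p n) ?L + sum (?p n) ?O"
      by (rule sum.union_disjoint[OF fL fO]) auto
    then show ?thesis unfolding SE_def e1 by (simp add: sum.distrib)
  qed
  have SL: "SE N M x ?L = (\<Sum>n\<in>?L. \<Sum>n'\<in>K. ?p n n') + (\<Sum>n\<in>?L. \<Sum>n'\<in>?O. ?p n n')"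
  proof -
    have "\<And>n. sum (?p n) (K \<union> ?O) = sum (?p n) K + sum (?p n) ?O"
      by (rule sum.union_disjoint[OF fK fO]) (use KK in auto)
    then show ?thesis unfolding SE_def e2 by (simp add: sum.distrib)
  qed
  have sw: "(\<Sum>n\<in>?L. \<Sum>n'\<in>K. ?p n n') = (\<Sum>n\<in>K. \<Sum>n'\<in>?L. ?p n' n)"
    by (rule sum.swap)
  have KO: "(\<Sum>n\<in>K. \<Sum>n'\<in>?O. ?p n n') + (\<Sum>n\<in>?L. \<Sum>n'\<in>?O. ?p n n') = (\<Sum>n\<in>Kbar. \<Sum>n'\<in>?O. ?p n n')"
  proof -
    have "Kbar = K \<union> ?L" using KK by auto
    then show ?thesis using sum.union_disjoint[OF fK fL, of "\<lambda>n. \<Sum>n'\<in>?O. ?p n n'"] by auto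
  qed
  have cw: "cut_weight w Kbar K = (\<Sum>n\<in>K. \<Sum>n'\<in>?L. (1/2) * (?p n n' + ?p n' n))"
    unfolding cut_weight_def w_def
    by (intro sum.cong refl, rule w_pair, auto)
  show ?thesis
    unfolding cw SK SL sw c_def using KO
    apply (simp add: sum.distrib sum_distrib_left algebra_simps)
    apply (simp only: sum.distrib[symmetric])
    apply simp
    done
qed

theorem proposition2:
  fixes N M :: nat and x :: "nat \<Rightarrow> nat \<Rightarrow> real^'d" and Kbar :: "nat set"
  assumes "Kbar \<subseteq> {1..N}" and "even (card Kbar)"
  shows "\<exists>(w :: nat set \<Rightarrow> real) (c :: real).
     (\<forall>K. K \<subseteq> Kbar \<longrightarrow>
        cut_weight w Kbar K = (1/2) * (SE N M x K + SE N M x (Kbar - K)) + c)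
   \<and> (\<forall>K. K \<subseteq> Kbar \<and> 2 * card K = card Kbar \<longrightarrow>
        ((\<forall>K'. K' \<subseteq> Kbar \<and> 2 * card K' = card Kbar \<longrightarrow>
            (1/2) * (SE N M x K + SE N M x (Kbar - K)) \<le> (1/2) * (SE N M x K' + SE N M x (Kbar - K')))
         \<longleftrightarrow>
         (\<forall>K'. K' \<subseteq> Kbar \<and> 2 * card K' = card Kbar \<longrightarrow>
            cut_weight w Kbar K \<le> cut_weight w Kbar K')))"
proof -
  define w where "w \<equiv> (\<lambda>S. (1/2) * (\<Sum>u\<in>S. \<Sum>v\<in>S - {u}. pearson M x u v))"
  define c where "c \<equiv> - (1/2) * (\<Sum>n\<in>Kbar. \<Sum>n'\<in>{1..N} - Kbar. pearson M x n n')"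
  have H: "\<forall>K. K \<subseteq> Kbar \<longrightarrow>
        cut_weight w Kbar K = (1/2) * (SE N M x K + SE N M x (Kbar - K)) + c"
    using cut_part[OF assms(1)] unfolding w_def c_def by blast
  show ?thesis
    apply (rule exI[of _ w], rule exI[of _ c])
    using H by auto
qed

end
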